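(* Let $H$ be a valid history. Then $H$ is locally opaque if and only if for every sub-history $sh \in \mathrm{shSet}(H)$ there exists a version order $\ll_{sh}$ such that the opacity graph $\mathrm{OPG}(sh, \ll_{sh})$ is acyclic.
   Context: Setting: transactions access transactional objects (t-objects) via operations read $r_k(x,v)$ (or $r_k(x,\mathcal{A})$ if it aborts), write $w_k(x,v)$, commit $c_k$ and abort $a_k$. A (sequential) history $H$ is a sequence of such events, each operation treated atomically; it is well-formed and contains an initial committed transaction $T_0$ writing $0$ to every t-object; written values are assumed unique. $\mathrm{txns}(H)$, $\mathrm{committed}(H)$, $\mathrm{aborted}(H)$, $\mathrm{live}(H)$ denote the transactions, committed, aborted and live (incomplete) ones. The completion $\overline{H}$ is obtained by appending an abort immediately after the last event of every live transaction. Real-time order: $T_k \prec^{RT}_H T_m$ if $T_k$ is complete and its last event precedes the first event of $T_m$. A sub-history of $H$ is formed by a subset of its transactions together with all their events, in the order of $H$. A successful read $r_k(x,v)$ is valid if some $T_j$ with $w_j(x,v)$ committed before it; $H$ is valid if all its successful reads are. A successful read $r_k(x,v)$ is legal if the transaction owning the latest commit event preceding it among transactions writing $x$ wrote $v$ to $x$; $H$ is legal if all successful reads are legal. $H$ is t-sequential if its transactions do not overlap. $H$ is opaque if it is valid and there is a legal t-sequential history $S$ with the same events as $\overline{H}$ such that $\prec^{RT}_H \subseteq \prec^{RT}_S$. $\mathrm{shSet}(H)$: (1) for each aborted transaction $T_i$, the sub-history consisting of all operations of the transactions committed before (the relevant event of) $T_i$ together with all successful operations of $T_i$, with a commit of $T_i$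 placed immediately after its last successful operation; (2) for the last committed transaction $T_l$, the sub-history of all committed transactions up to and including $T_l$. $H$ is locally opaque if every sub-history in $\mathrm{shSet}(H)$ is opaque. Version order: for a history $H$ and t-object $x$, any total order on the versions of $x$ created by committed transactions of $H$ ($T_i$ writing $x$ creates version $x_i$); $\ll$ is the union over all t-objects. Opacity graph $\mathrm{OPG}(H,\ll)$: one vertex per transaction of $\overline{H}$; edges: (real-time) $T_i \to T_j$ if $T_i$ commits before $T_j$ starts; (reads-from) $T_i\to T_j$ if $T_j$ reads $x$ from $T_i$; (multiversion) whenever $r_k(x,v)$ reads from $w_j(x,v)$ and a committed $T_i$ writes $x$ with a different value, add $T_i\to T_j$ if $x_i \ll x_j$ and $T_k \to T_i$ if $x_j \ll x_i$. *)

theory Defs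
  imports Main
begin

text \<open>Transactions are identified by natural numbers, T_0 being the initial transaction.
  A read returning a value v is  Read k x (Some v); an aborted read r_k(x,A) is Read k x None.\<close>

datatype ('o, 'v) event =
    Read nat 'o "'v option"
  | Write nat 'o 'v
  | Commit nat
  | Abort nat

fun tid :: "('o, 'v) event \<Rightarrow> nat" where
  "tid (Read k _ _) = k"
| "tid (Write k _ _) = k"
| "tid (Commit k) = k"
| "tid (Abort k) = k"

type_synonym ('o, 'v) history = "('o, 'v) event list"

fun terminal :: "('o, 'v) event \<Rightarrow> bool" where
  "terminal (Commit _) = True"
| "terminal (Abort _) = True"
| "terminal (Read _ _ None) = True"
| "terminal _ = False"

fun aborting :: "('o, 'v) event \<Rightarrow> bool" where
  "aborting (Abort _) = True"
| "aborting (Read _ _ None) = True"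
| "aborting _ = False"

fun successful_op :: "('o, 'v) event \<Rightarrow> bool" where
  "successful_op (Write _ _ _) = True"
| "successful_op (Read _ _ (Some _)) = True"
| "successful_op _ = False"

definition txns :: "('o, 'v) history \<Rightarrow> nat set" where
  "txns H = tid ` set H"

definition committed :: "('o, 'v) history \<Rightarrow> nat set" where
  "committed H = {k. Commit k \<in> set H}"

definition aborted :: "('o, 'v) history \<Rightarrow> nat set" where
  "aborted H = {k. \<exists>e\<in>set H. aborting e \<and> tid e = k}"

definition live :: "('o, 'v) history \<Rightarrow> nat set" where
  "live H = txns H - committed H - aborted H"

definition complete_txns :: "('o, 'v) history \<Rightarrow> nat set" where
  "complete_txns H = committed H \<union> aborted H"

definition well_formed :: "('o, 'v) history \<Rightarrow> bool" where
  "well_formed H \<longleftrightarrow>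
     (\<forall>i<length H. \<forall>j<length H. i < j \<longrightarrow> terminal (H ! i) \<longrightarrow> tid (H ! j) \<noteq> tid (H ! i))"

text \<open>The history starts with the initial committed transaction T_0 that writes 0 to every
  t-object (t-objects are the elements of the finite type 'o); T_0 has no other events.\<close>
definition has_init :: "('o::finite, 'v::zero) history \<Rightarrow> bool" where
  "has_init H \<longleftrightarrow> (\<exists>p rest. H = p @ [Commit 0] @ rest \<and> distinct p \<and>
      set p = {Write 0 x 0 | x. True} \<and> (\<forall>e\<in>set rest. tid e \<noteq> 0))"

definition unique_writes :: "('o, 'v) history \<Rightarrow> bool" where
  "unique_writes H \<longleftrightarrow> (\<forall>i<length H. \<forall>j<length H. \<forall>k k' x v.
      H ! i = Write k x v \<longrightarrow> H ! j = Write k' x v \<longrightarrow> i = j)"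

definition is_history :: "('o::finite, 'v::zero) history \<Rightarrow> bool" where
  "is_history H \<longleftrightarrow> well_formed H \<and> has_init H \<and> unique_writes H"

definition last_event_of :: "('o, 'v) history \<Rightarrow> nat \<Rightarrow> bool" where
  "last_event_of H i \<longleftrightarrow> (\<forall>j. i < j \<and> j < length H \<longrightarrow> tid (H ! j) \<noteq> tid (H ! i))"

definition completion :: "('o, 'v) history \<Rightarrow> ('o, 'v) history" where
  "completion H = concat (map (\<lambda>i. H ! i #
      (if tid (H ! i) \<in> live H \<and> last_event_of H i then [Abort (tid (H ! i))] else []))
      [0..<length H])"

definition rt :: "('o, 'v) history \<Rightarrow> nat \<Rightarrow> nat \<Rightarrow> bool" where
  "rt H k m \<longleftrightarrow> k \<in> complete_txns H \<and> m \<in> txns H \<and>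
     (\<forall>i<length H. \<forall>j<length H. tid (H ! i) = k \<longrightarrow> tid (H ! j) = m \<longrightarrow> i < j)"

definition subhistory :: "nat set \<Rightarrow> ('o, 'v) history \<Rightarrow> ('o, 'v) history" where
  "subhistory T H = filter (\<lambda>e. tid e \<in> T) H"

definition valid_read :: "('o, 'v) history \<Rightarrow> nat \<Rightarrow> bool" where
  "valid_read H i \<longleftrightarrow> (\<forall>k x v. H ! i = Read k x (Some v) \<longrightarrow>
      (\<exists>j<i. \<exists>t. H ! j = Commit t \<and> Write t x v \<in> set H))"

definition valid :: "('o, 'v) history \<Rightarrow> bool" where
  "valid H \<longleftrightarrow> (\<forall>i<length H. valid_read H i)"

definition writes_obj :: "('o, 'v) history \<Rightarrow> nat \<Rightarrow> 'o \<Rightarrow> bool" where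
  "writes_obj H t x \<longleftrightarrow> (\<exists>w. Write t x w \<in> set H)"

definition legal_read :: "('o, 'v) history \<Rightarrow> nat \<Rightarrow> bool" where
  "legal_read H i \<longleftrightarrow> (\<forall>k x v. H ! i = Read k x (Some v) \<longrightarrow>
      (\<exists>j<i. \<exists>t. H ! j = Commit t \<and> writes_obj H t x \<and> Write t x v \<in> set H \<and>
         (\<forall>j'. j < j' \<and> j' < i \<longrightarrow> \<not> (\<exists>t'. H ! j' = Commit t' \<and> writes_obj H t' x))))"

definition legal :: "('o, 'v) history \<Rightarrow> bool" where
  "legal H \<longleftrightarrow> (\<forall>i<length H. legal_read H i)"

definition t_sequential :: "('o, 'v) history \<Rightarrow> bool" where
  "t_sequential H \<longleftrightarrow> (\<forall>i j k. i < j \<and> j < k \<and> k < length H \<and> tid (H ! i) = tid (H ! k)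
      \<longrightarrow> tid (H ! j) = tid (H ! i))"

definition equivalent :: "('o, 'v) history \<Rightarrow> ('o, 'v) history \<Rightarrow> bool" where
  "equivalent S H \<longleftrightarrow> (\<forall>k. filter (\<lambda>e. tid e = k) S = filter (\<lambda>e. tid e = k) H)"

definition opaque :: "('o, 'v) history \<Rightarrow> bool" where
  "opaque H \<longleftrightarrow> valid H \<and> (\<exists>S. legal S \<and> t_sequential S \<and> equivalent S (completion H) \<and>
      (\<forall>k m. rt H k m \<longrightarrow> rt S k m))"

definition idx_of_abort :: "('o, 'v) history \<Rightarrow> nat \<Rightarrow> nat" where
  "idx_of_abort H t = (LEAST p. p < length H \<and> aborting (H ! p) \<and> tid (H ! p) = t)"

definition commit_idx_before :: "('o, 'v) history \<Rightarrow> nat \<Rightarrow> nat set" where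
  "commit_idx_before H p = {k. \<exists>j<p. H ! j = Commit k}"

definition last_succ_op :: "('o, 'v) history \<Rightarrow> nat \<Rightarrow> nat \<Rightarrow> bool" where
  "last_succ_op H t n \<longleftrightarrow> n < length H \<and> tid (H ! n) = t \<and> successful_op (H ! n) \<and>
     (\<forall>m. n < m \<and> m < length H \<longrightarrow> \<not> (tid (H ! m) = t \<and> successful_op (H ! m)))"

text \<open>Sub-history for an aborted transaction T_t: all events of transactions that committed before
  the aborting event of T_t, plus the successful operations of T_t, with c_t placed immediately
  after the last successful operation of T_t.\<close>
definition sh_aborted :: "('o, 'v) history \<Rightarrow> nat \<Rightarrow> ('o, 'v) history" where
  "sh_aborted H t = concat (map (\<lambda>n.
      (if tid (H ! n) \<in> commit_idx_before H (idx_of_abort H t)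
          \<or> (tid (H ! n) = t \<and> successful_op (H ! n)) then [H ! n] else [])
      @ (if last_succ_op H t n then [Commit t] else []))
      [0..<length H])"

definition sh_committed :: "('o, 'v) history \<Rightarrow> ('o, 'v) history" where
  "sh_committed H = subhistory (committed H) H"

definition shSet :: "('o, 'v) history \<Rightarrow> ('o, 'v) history set" where
  "shSet H = {sh_aborted H t | t. t \<in> aborted H} \<union> {sh_committed H}"

definition locally_opaque :: "('o, 'v) history \<Rightarrow> bool" where
  "locally_opaque H \<longleftrightarrow> (\<forall>sh\<in>shSet H. opaque sh)"

text \<open>Versions of x: committed transactions writing x (T_i creates version x_i).\<close>
definition versions :: "('o, 'v) history \<Rightarrow> 'o \<Rightarrow> nat set" where
  "versions H x = {i. i \<in> committed H \<and> writes_obj H i x}"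

definition version_order :: "('o, 'v) history \<Rightarrow> (('o \<times> nat) \<times> ('o \<times> nat)) set \<Rightarrow> bool" where
  "version_order H vo \<longleftrightarrow>
     vo \<subseteq> {((x, i), (y, j)). x = y \<and> i \<in> versions H x \<and> j \<in> versions H x} \<and>
     (\<forall>x. strict_linear_order_on (versions H x) {(i, j). ((x, i), (x, j)) \<in> vo})"

definition reads_from :: "('o, 'v) history \<Rightarrow> nat \<Rightarrow> nat \<Rightarrow> 'o \<Rightarrow> bool" where
  "reads_from H j k x \<longleftrightarrow> (\<exists>v. Read k x (Some v) \<in> set H \<and> Write j x v \<in> set H)"

definition commits_before_start :: "('o, 'v) history \<Rightarrow> nat \<Rightarrow> nat \<Rightarrow> bool" where
  "commits_before_start H i j \<longleftrightarrow> j \<in> txns H \<and>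
     (\<exists>c<length H. H ! c = Commit i \<and> (\<forall>n<length H. tid (H ! n) = j \<longrightarrow> c < n))"

definition opg :: "('o, 'v) history \<Rightarrow> (('o \<times> nat) \<times> ('o \<times> nat)) set \<Rightarrow> (nat \<times> nat) set" where
  "opg H vo =
     {(i, j). commits_before_start H i j}
   \<union> {(i, j). \<exists>x. reads_from H i j x}
   \<union> {(i, j). \<exists>k x v v'. Read k x (Some v) \<in> set H \<and> Write j x v \<in> set H \<and>
         i \<in> committed H \<and> Write i x v' \<in> set H \<and> v' \<noteq> v \<and> i \<noteq> j \<and> i \<noteq> k \<and>
         ((x, i), (x, j)) \<in> vo}
   \<union> {(k, i). \<exists>j x v v'. Read k x (Some v) \<in> set H \<and> Write j x v \<in> set H \<and>
         i \<in> committed H \<and> Write i x v' \<in> set H \<and> v' \<noteq> v \<and> i \<noteq> j \<and> i \<noteq> k \<and>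
         ((x, j), (x, i)) \<in> vo}"

end

theory Submission
  imports Defs
begin

definition C1 :: "('o,'v) history \<Rightarrow> bool" where
  "C1 G \<longleftrightarrow> (\<forall>k\<in>txns G. \<exists>ys. filter (\<lambda>e. tid e = k) G = ys @ [Commit k] \<and> Commit k \<notin> set ys)"

definition UW :: "('o,'v) history \<Rightarrow> bool" where
  "UW G \<longleftrightarrow> (\<forall>a b x v. Write a x v \<in> set G \<longrightarrow> Write b x v \<in> set G \<longrightarrow> a = b)"

lemma commit_split:
  "filter (\<lambda>e. tid e = k) xs = ys @ [Commit k] \<Longrightarrow> Commit k \<notin> set ys \<Longrightarrow>
   \<exists>a b. xs = a @ Commit k # b \<and> Commit k \<notin> set a \<and> (\<forall>e\<in>set b. tid e \<noteq> k)"
proof (induction xs arbitrary: ys rule: rev_induct)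
  case Nil then show ?case by simp
next
  case (snoc e xs)
  show ?case
  proof (cases "tid e = k")
    case False
    with snoc.prems have "filter (\<lambda>e. tid e = k) xs = ys @ [Commit k]" by simp
    from snoc.IH[OF this snoc.prems(2)] obtain a b where
      "xs = a @ Commit k # b" "Commit k \<notin> set a" "\<forall>e\<in>set b. tid e \<noteq> k" by blast
    then show ?thesis using False by (intro exI[of _ a] exI[of _ "b @ [e]"]) auto
  next
    case True
    with snoc.prems have "e = Commit k" "filter (\<lambda>e. tid e = k) xs = ys" by auto
    moreover have "Commit k \<notin> set xs"
    proof
      assume "Commit k \<in> set xs"
      then have "Commit k \<in> set (filter (\<lambda>e. tid e = k) xs)" by simp
      with calculation snoc.prems(2) show False by simp
    qed
    ultimately show ?thesis by (intro exI[of _ xs] exI[of _ "[]"]) auto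
  qed
qed

lemma C1_split:
  assumes "C1 G" "k \<in> txns G"
  shows "\<exists>a b. G = a @ Commit k # b \<and> Commit k \<notin> set a \<and> (\<forall>e\<in>set b. tid e \<noteq> k)"
  using assms commit_split unfolding C1_def by blast

lemma C1_txns: "C1 G \<Longrightarrow> k \<in> txns G \<longleftrightarrow> Commit k \<in> set G"
  unfolding txns_def
  by (metis (mono_tags, lifting) C1_split image_eqI in_set_conv_decomp tid.simps(3) txns_def)

lemma C1_pos:
  assumes "C1 G" "k \<in> txns G"
  shows "\<exists>c<length G. G!c = Commit k \<and> (\<forall>i<length G. G!i = Commit k \<longrightarrow> i = c)
     \<and> (\<forall>i<length G. tid (G!i) = k \<longrightarrow> i \<le> c)"
proof -
  from C1_split[OF assms] obtain a b where ab:
    "G = a @ Commit k # b" "Commit k \<notin> set a" "\<forall>e\<in>set b. tid e \<noteq> k" by blast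
  have gt: "tid (G!i) \<noteq> k" if "i < length G" "i > length a" for i
  proof -
    have "G!i = b!(i - Suc (length a))" using ab(1) that by (simp add: nth_append)
    moreover have "i - Suc (length a) < length b" using that ab(1) by simp
    ultimately have "G!i \<in> set b" by simp
    then show ?thesis using ab by auto
  qed
  have lt: "G!i \<noteq> Commit k" if "i < length a" for i
    using that ab by (metis nth_append_left nth_mem)
  show ?thesis
  proof (intro exI[of _ "length a"] conjI allI impI)
    show "length a < length G" using ab by simp
    show "G ! length a = Commit k" using ab by simp
    fix i assume "i < length G"
    { assume "G!i = Commit k" then show "i = length a"
        using gt[of i] lt[of i] \<open>i < length G\<close> by (metis linorder_neqE_nat tid.simps(3)) }
    { assume "tid (G!i) = k" then show "i \<le> length a"
        using gt[of i] \<open>i < length G\<close> by (meson not_le) }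
  qed
qed


definition cpos :: "('o,'v) history \<Rightarrow> nat \<Rightarrow> nat" where
  "cpos G k = (THE c. c < length G \<and> G!c = Commit k)"

lemma cpos:
  assumes "C1 G" "k \<in> txns G"
  shows "cpos G k < length G" "G!(cpos G k) = Commit k"
    "\<And>i. i < length G \<Longrightarrow> G!i = Commit k \<Longrightarrow> i = cpos G k"
    "\<And>i. i < length G \<Longrightarrow> tid (G!i) = k \<Longrightarrow> i \<le> cpos G k"
proof -
  from C1_pos[OF assms] obtain c where c: "c<length G" "G!c = Commit k"
    "\<forall>i<length G. G!i = Commit k \<longrightarrow> i = c" "\<forall>i<length G. tid (G!i) = k \<longrightarrow> i \<le> c" by blast
  have eq: "cpos G k = c" unfolding cpos_def
    by (rule the_equality) (use c in blast)+
  then show "cpos G k < length G" "G!(cpos G k) = Commit k" using c(1,2) by simp_all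
  show "\<And>i. i < length G \<Longrightarrow> G!i = Commit k \<Longrightarrow> i = cpos G k" using c(3) eq by blast
  show "\<And>i. i < length G \<Longrightarrow> tid (G!i) = k \<Longrightarrow> i \<le> cpos G k" using c(4) eq by blast
qed

lemma tid_txns: "e \<in> set G \<Longrightarrow> tid e \<in> txns G"
  unfolding txns_def by simp

lemma completion_C1:
  assumes "C1 G" shows "completion G = G"
proof -
  have "live G = {}" unfolding live_def committed_def using C1_txns[OF assms] by auto
  then have "completion G = concat (map (\<lambda>i. [G!i]) [0..<length G])"
    unfolding completion_def by (intro arg_cong[where f=concat] map_cong) auto
  also have "\<dots> = G" by (simp add: map_nth)
  finally show ?thesis .
qed

lemma acyclic_cp: "acyclic {(a,b). (f a::nat) < f b}"
proof -
  have "{(a,b). f a < f b} = inv_image less_than f" by (auto simp: inv_image_def)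
  then show ?thesis using wf_acyclic wf_inv_image wf_less_than by metis
qed

lemma opaque_imp_graph:
  assumes C: "C1 G" and U: "UW G" and O: "opaque G"
  shows "\<exists>vo. version_order G vo \<and> acyclic (opg G vo)"
proof -
  obtain S where L: "legal S" and TS: "t_sequential S" and EQ: "equivalent S G"
    and RT: "\<And>k m. rt G k m \<Longrightarrow> rt S k m"
    using O unfolding opaque_def completion_C1[OF C] by blast
  have eqf: "\<And>k. filter (\<lambda>e. tid e = k) S = filter (\<lambda>e. tid e = k) G"
    using EQ unfolding equivalent_def by blast
  have setS: "set S = set G"
  proof (intro set_eqI)
    fix x show "x \<in> set S \<longleftrightarrow> x \<in> set G"
    proof -
      have "x \<in> set (filter (\<lambda>e. tid e = tid x) S) \<longleftrightarrow> x \<in> set (filter (\<lambda>e. tid e = tid x) G)"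
        by (simp only: eqf)
      then show ?thesis by simp
    qed
  qed
  have txS: "txns S = txns G" unfolding txns_def setS ..
  have CS: "C1 S" using C unfolding C1_def txS eqf .
  define cp where "cp = cpos S"
  note cpS = cpos[OF CS, folded cp_def, unfolded txS]
  have comm_tx: "Commit k \<in> set G \<Longrightarrow> k \<in> txns G" for k using tid_txns by fastforce
  define vo where "vo = {((x,a),(y,b)). x = y \<and> a \<in> versions G x \<and> b \<in> versions G x \<and> cp a < cp b}"
  have vers_tx: "a \<in> versions G x \<Longrightarrow> a \<in> txns G" for a x
    unfolding versions_def committed_def using comm_tx by blast
  have VO: "version_order G vo"
    unfolding version_order_def
  proof (intro conjI allI)
    show "vo \<subseteq> {((x, i), y, j). x = y \<and> i \<in> versions G x \<and> j \<in> versions G x}"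
      unfolding vo_def by auto
    fix x
    show "strict_linear_order_on (versions G x) {(i, j). ((x, i), x, j) \<in> vo}"
      unfolding strict_linear_order_on_def
    proof (intro conjI)
      show "trans {(i, j). ((x, i), x, j) \<in> vo}" unfolding vo_def trans_def by auto
      show "irrefl {(i, j). ((x, i), x, j) \<in> vo}" unfolding vo_def irrefl_def by auto
      show "total_on (versions G x) {(i, j). ((x, i), x, j) \<in> vo}"
        unfolding total_on_def vo_def
      proof (intro ballI impI)
        fix a b assume ab: "a \<in> versions G x" "b \<in> versions G x" "a \<noteq> b"
        have "cp a \<noteq> cp b" using cpS(2)[OF vers_tx[OF ab(1)]] cpS(2)[OF vers_tx[OF ab(2)]] ab(3) by auto
        then show "(a, b) \<in> {(i, j). ((x, i), x, j) \<in> {((x, a), y, b). x = y \<and> a \<in> versions G x \<and> b \<in> versions G x \<and> cp a < cp b}} \<or>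
           (b, a) \<in> {(i, j). ((x, i), x, j) \<in> {((x, a), y, b). x = y \<and> a \<in> versions G x \<and> b \<in> versions G x \<and> cp a < cp b}}"
          using ab by auto
      qed
    qed
  qed
  have readpos: "\<exists>q<length S. S!q = Read k x (Some v) \<and> cp k > q"
    if "Read k x (Some v) \<in> set G" for k x v
  proof -
    have "Read k x (Some v) \<in> set S" using that setS by simp
    then obtain q where q: "q < length S" "S!q = Read k x (Some v)" unfolding in_set_conv_nth by blast
    have kt: "k \<in> txns G" using that tid_txns by fastforce
    have "q \<le> cp k" using cpS(4)[OF kt q(1)] q by simp
    moreover have "q \<noteq> cp k" using cpS(2)[OF kt] q by auto
    ultimately show ?thesis using q by auto
  qed
  have leg: "\<exists>jj<q. S!jj = Commit j \<and> jj = cp j \<and>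
         (\<forall>j'. jj < j' \<and> j' < q \<longrightarrow> \<not> (\<exists>t'. S ! j' = Commit t' \<and> writes_obj S t' x))"
    if "q < length S" "S!q = Read k x (Some v)" "Write j x v \<in> set G" for q k x v j
  proof -
    from L that have "legal_read S q" unfolding legal_def by blast
    then have "\<exists>jj<q. \<exists>t. S ! jj = Commit t \<and> writes_obj S t x \<and> Write t x v \<in> set S \<and>
         (\<forall>j'. jj < j' \<and> j' < q \<longrightarrow> \<not> (\<exists>t'. S ! j' = Commit t' \<and> writes_obj S t' x))"
      unfolding legal_read_def using that(2) by simp
    then obtain jj t where jj: "jj < q" "S!jj = Commit t" "Write t x v \<in> set S"
      "\<forall>j'. jj < j' \<and> j' < q \<longrightarrow> \<not> (\<exists>t'. S ! j' = Commit t' \<and> writes_obj S t' x)"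
      by blast
    have tj: "t = j" using U jj(3) that(3) setS unfolding UW_def by blast
    have "j \<in> txns G" using that(3) tid_txns by fastforce
    moreover have "jj < length S" using jj(1) that(1) by simp
    ultimately have "jj = cp j" using cpS(3) jj(2) tj by blast
    then show ?thesis using jj tj by blast
  qed
  have edges: "cp a < cp b" if "(a,b) \<in> opg G vo" for a b
    using that unfolding opg_def
  proof (elim UnE CollectE case_prodE; clarify)
    assume cbs: "commits_before_start G a b"
    then obtain c where c: "b \<in> txns G" "c < length G" "G!c = Commit a"
      "\<forall>n<length G. tid (G!n) = b \<longrightarrow> c < n" unfolding commits_before_start_def by blast
    have at: "a \<in> txns G" using c comm_tx by (metis nth_mem)
    note cpG = cpos[OF C at]
    have "rt G a b" unfolding rt_def complete_txns_def committed_def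
    proof (intro conjI allI impI)
      show "a \<in> {k. Commit k \<in> set G} \<union> aborted G" using c by (metis UnI1 mem_Collect_eq nth_mem)
      show "b \<in> txns G" by fact
      fix i j assume "i < length G" "j < length G" "tid (G!i) = a" "tid (G!j) = b"
      then show "i < j" using cpG(3)[OF c(2,3)] cpG(4) c(4) by (metis le_less_trans)
    qed
    then have "rt S a b" by (rule RT)
    then show "cp a < cp b" unfolding rt_def txS using cpS at c(1) by auto
  next
    fix x assume "reads_from G a b x"
    then obtain v where v: "Read b x (Some v) \<in> set G" "Write a x v \<in> set G" unfolding reads_from_def by blast
    obtain q where q: "q<length S" "S!q = Read b x (Some v)" "cp b > q" using readpos[OF v(1)] by blast
    from leg[OF q(1,2) v(2)] q show "cp a < cp b" by auto
  next
    fix x assume "((x, a), x, b) \<in> vo"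
    then show "cp a < cp b" unfolding vo_def by auto
  next
    fix j x v v'
    assume h: "Read a x (Some v) \<in> set G" "Write j x v \<in> set G" "b \<in> committed G"
      "Write b x v' \<in> set G" "v' \<noteq> v" "b \<noteq> j" "b \<noteq> a" "((x, j), x, b) \<in> vo"
    obtain q where q: "q<length S" "S!q = Read a x (Some v)" "cp a > q" using readpos[OF h(1)] by blast
    obtain jj where jj: "jj<q" "S!jj = Commit j" "jj = cp j"
      "\<forall>j'. jj < j' \<and> j' < q \<longrightarrow> \<not> (\<exists>t'. S ! j' = Commit t' \<and> writes_obj S t' x)"
      using leg[OF q(1,2) h(2)] by blast
    have bt: "b \<in> txns G" using h(3) comm_tx unfolding committed_def by blast
    have at: "a \<in> txns G" using h(1) tid_txns by fastforce
    have "cp j < cp b" using h(8) unfolding vo_def by auto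
    moreover have "writes_obj S b x" using h(4) setS unfolding writes_obj_def by blast
    ultimately have "\<not> cp b < q" using jj(3,4) cpS(2)[OF bt] by blast
    moreover have "cp b \<noteq> q" using q(2) cpS(2)[OF bt] by auto
    ultimately have qb: "q < cp b" by linarith
    show "cp a < cp b"
    proof (rule ccontr)
      assume "\<not> cp a < cp b"
      moreover have "cp a \<noteq> cp b" using cpS(2)[OF at] cpS(2)[OF bt] h(7) by auto
      ultimately have "cp b < cp a" by linarith
      with qb have "tid (S!cp b) = tid (S!q)" using TS cpS(1)[OF at] q(2) cpS(2)[OF at]
        unfolding t_sequential_def by (metis tid.simps(1) tid.simps(3))
      then show False using q(2) cpS(2)[OF bt] h(7) by simp
    qed
  qed
  have "opg G vo \<subseteq> {(a,b). cp a < cp b}" using edges by auto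
  then have "acyclic (opg G vo)" using acyclic_cp acyclic_subset by blast
  with VO show ?thesis by blast
qed


lemma filter_blocks:
  "distinct ts \<Longrightarrow> filter (\<lambda>e. tid e = k) (concat (map (\<lambda>k. filter (\<lambda>e. tid e = k) G) ts))
     = (if k \<in> set ts then filter (\<lambda>e. tid e = k) G else [])"
proof (induction ts)
  case Nil then show ?case by simp
next
  case (Cons a ts)
  have "filter (\<lambda>e. tid e = k) (filter (\<lambda>e. tid e = a) G) = (if k = a then filter (\<lambda>e. tid e = k) G else [])"
    by (auto simp: filter_filter intro: filter_False)
  with Cons show ?case by auto
qed

lemma sorted_blocks:
  assumes "sorted_wrt (<) (map g ts)" "\<And>k e. e \<in> set (f k) \<Longrightarrow> tid e = k"
  shows "sorted (map (\<lambda>e. g (tid e)) (concat (map f ts)))"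
  using assms(1)
proof (induction ts)
  case Nil then show ?case by simp
next
  case (Cons a ts)
  have s1: "sorted (map (\<lambda>e. g (tid e)) (f a))"
  proof -
    have "map (\<lambda>e. g (tid e)) (f a) = map (\<lambda>_. g a) (f a)" using assms(2) by auto
    then show ?thesis by (simp add: sorted_iff_nth_mono)
  qed
  have "\<forall>x\<in>set (f a). \<forall>y\<in>set (concat (map f ts)). g (tid x) \<le> g (tid y)"
  proof (intro ballI)
    fix x y assume "x \<in> set (f a)" "y \<in> set (concat (map f ts))"
    then obtain b where "b \<in> set ts" "y \<in> set (f b)" "tid x = a" using assms(2) by auto
    then show "g (tid x) \<le> g (tid y)" using Cons.prems assms(2) by fastforce
  qed
  with Cons s1 show ?case by (auto simp: sorted_append)
qed

lemma rank_mono: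
  assumes "finite T" "acyclic R" "(a,b) \<in> R" "a \<in> T"
  shows "card {c\<in>T. (c,a)\<in>R\<^sup>+} < card {c\<in>T. (c,b)\<in>R\<^sup>+}"
proof (rule psubset_card_mono)
  show "finite {c\<in>T. (c,b)\<in>R\<^sup>+}" using assms(1) by simp
  have "{c\<in>T. (c,a)\<in>R\<^sup>+} \<subseteq> {c\<in>T. (c,b)\<in>R\<^sup>+}" using assms(3) by auto
  moreover have "a \<in> {c\<in>T. (c,b)\<in>R\<^sup>+}" "a \<notin> {c\<in>T. (c,a)\<in>R\<^sup>+}"
    using assms(2-4) unfolding acyclic_def by auto
  ultimately show "{c\<in>T. (c,a)\<in>R\<^sup>+} \<subset> {c\<in>T. (c,b)\<in>R\<^sup>+}" by blast
qed


lemma graph_imp_opaque: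
  assumes C: "C1 G" and U: "UW G" and V: "valid G" and VO: "version_order G vo"
    and A: "acyclic (opg G vo)"
  shows "opaque G"
proof -
  define R where "R = opg G vo"
  define T where "T = txns G"
  have finT: "finite T" unfolding T_def txns_def by simp
  have comm_tx: "Commit k \<in> set G \<Longrightarrow> k \<in> T" for k unfolding T_def using tid_txns by fastforce
  define rk where "rk a = card {c\<in>T. (c,a)\<in>R\<^sup>+}" for a
  have rkm: "(a,b) \<in> R \<Longrightarrow> a \<in> T \<Longrightarrow> rk a < rk b" for a b
    unfolding rk_def using rank_mono[OF finT A[folded R_def]] by blast
  define ts where "ts = sort_key rk (sorted_list_of_set T)"
  have dts: "distinct ts" and sts: "set ts = T" and srt: "sorted (map rk ts)"
    unfolding ts_def using finT by auto
  define g where "g k = (THE p. p < length ts \<and> ts!p = k)" for k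
  have gnth: "g (ts!p) = p" if "p < length ts" for p
    unfolding g_def by (rule the_equality) (use that dts nth_eq_iff_index_eq in auto)
  have gT: "g k < length ts \<and> ts!(g k) = k" if "k \<in> T" for k
  proof -
    have "k \<in> set ts" using that sts by simp
    then obtain p where "p < length ts" "ts!p = k" unfolding in_set_conv_nth by blast
    then show ?thesis using gnth by auto
  qed
  have ginj: "a = b" if "a \<in> T" "b \<in> T" "g a = g b" for a b
    using gT[OF that(1)] gT[OF that(2)] that(3) by metis
  have gm: "g a < g b" if "(a,b) \<in> R" "a \<in> T" "b \<in> T" for a b
  proof (rule ccontr)
    assume "\<not> g a < g b"
    then have "g b \<le> g a" by simp
    then have "(map rk ts)!(g b) \<le> (map rk ts)!(g a)"
      using srt gT[OF that(2)] gT[OF that(3)] sorted_nth_mono by (metis length_map)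
    then have "rk b \<le> rk a" using gT[OF that(2)] gT[OF that(3)] by simp
    then show False using rkm[OF that(1,2)] by simp
  qed
  have mapg: "map g ts = [0..<length ts]"
    by (rule nth_equalityI) (auto simp: gnth)
  define S where "S = concat (map (\<lambda>k. filter (\<lambda>e. tid e = k) G) ts)"
  have eqf: "filter (\<lambda>e. tid e = k) S = filter (\<lambda>e. tid e = k) G" for k
  proof (cases "k \<in> T")
    case True then show ?thesis unfolding S_def filter_blocks[OF dts] sts by simp
  next
    case False
    then have "filter (\<lambda>e. tid e = k) G = []"
      unfolding T_def using tid_txns by (metis (mono_tags, lifting) filter_False)
    then show ?thesis unfolding S_def filter_blocks[OF dts] sts by simp
  qed
  have setS: "set S = set G"
  proof (intro set_eqI)
    fix x show "x \<in> set S \<longleftrightarrow> x \<in> set G"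
    proof -
      have "x \<in> set (filter (\<lambda>e. tid e = tid x) S) \<longleftrightarrow> x \<in> set (filter (\<lambda>e. tid e = tid x) G)"
        by (simp only: eqf)
      then show ?thesis by simp
    qed
  qed
  have txS: "txns S = txns G" unfolding txns_def setS ..
  have CS: "C1 S" using C unfolding C1_def txS eqf .
  note cpS = cpos[OF CS, unfolded txS, folded T_def]
  note cpG = cpos[OF C, folded T_def]
  have srtS: "sorted (map (\<lambda>e. g (tid e)) S)"
    unfolding S_def by (rule sorted_blocks) (auto simp: mapg)
  have tidS: "tid (S!i) \<in> T" if "i < length S" for i
    using that setS tid_txns unfolding T_def by (metis nth_mem)
  have key: "i < j" if "i < length S" "j < length S" "g (tid (S!i)) < g (tid (S!j))" for i j
  proof (rule ccontr)
    assume "\<not> i < j"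
    then have "j \<le> i" by simp
    then have "(map (\<lambda>e. g (tid e)) S)!j \<le> (map (\<lambda>e. g (tid e)) S)!i"
      using srtS that sorted_nth_mono by (metis length_map)
    then show False using that by simp
  qed
  have keyle: "g (tid (S!i)) \<le> g (tid (S!j))" if "i \<le> j" "j < length S" for i j
  proof -
    have "(map (\<lambda>e. g (tid e)) S)!i \<le> (map (\<lambda>e. g (tid e)) S)!j"
      using srtS that sorted_nth_mono by (metis length_map)
    then show ?thesis using that by simp
  qed
  have TS: "t_sequential S" unfolding t_sequential_def
  proof (intro allI impI)
    fix i j k assume h: "i < j \<and> j < k \<and> k < length S \<and> tid (S ! i) = tid (S ! k)"
    then have "g (tid (S!i)) \<le> g (tid (S!j))" "g (tid (S!j)) \<le> g (tid (S!k))"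
      using keyle[of i j] keyle[of j k] by simp_all
    then have "g (tid (S!j)) = g (tid (S!i))" using h by simp
    then show "tid (S ! j) = tid (S ! i)" using ginj tidS h by (meson order.strict_trans)
  qed
  have EQ: "equivalent S (completion G)" unfolding completion_C1[OF C] equivalent_def using eqf by blast
  have RT: "rt S k m" if "rt G k m" for k m
  proof -
    from that have k1: "k \<in> complete_txns G" and m1: "m \<in> txns G"
      and pos: "\<forall>i<length G. \<forall>j<length G. tid (G ! i) = k \<longrightarrow> tid (G ! j) = m \<longrightarrow> i < j"
      unfolding rt_def by blast+
    have kT: "k \<in> T" using k1 comm_tx unfolding complete_txns_def committed_def aborted_def T_def
      using tid_txns by fastforce
    have mT: "m \<in> T" using m1 T_def by simp
    have "commits_before_start G k m" unfolding commits_before_start_def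
      using m1 cpG(1,2)[OF kT] pos by (metis tid.simps(3))
    then have "(k,m) \<in> R" unfolding R_def opg_def by blast
    then have gkm: "g k < g m" using gm kT mT by blast
    show ?thesis unfolding rt_def complete_txns_def committed_def
    proof (intro conjI allI impI)
      show "k \<in> {k. Commit k \<in> set S} \<union> aborted S" using cpS(1,2)[OF kT] by (metis UnI1 mem_Collect_eq nth_mem)
      show "m \<in> txns S" using m1 txS by simp
      fix i j assume "i < length S" "j < length S" "tid (S ! i) = k" "tid (S ! j) = m"
      then show "i < j" using key gkm by simp
    qed
  qed
  have LG: "legal S" unfolding legal_def legal_read_def
  proof (intro allI impI)
    fix q k x v assume q: "q < length S" "S ! q = Read k x (Some v)"
    have rG: "Read k x (Some v) \<in> set G" using q setS by (metis nth_mem)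
    then obtain i where i: "i < length G" "G!i = Read k x (Some v)" unfolding in_set_conv_nth by blast
    have "valid_read G i" using V i unfolding valid_def by blast
    then obtain j t where jt: "j < i" "G!j = Commit t" "Write t x v \<in> set G"
      unfolding valid_read_def using i(2) by blast
    have kT: "k \<in> T" using rG tid_txns T_def by fastforce
    have tT: "t \<in> T" using jt i comm_tx by (metis nth_mem order.strict_trans)
    have "j = cpos G t" using cpG(3)[OF tT] jt i by simp
    moreover have "i \<le> cpos G k" using cpG(4)[OF kT i(1)] i(2) by simp
    ultimately have tk: "t \<noteq> k" using jt(1) by auto
    have "(t,k) \<in> R" unfolding R_def opg_def reads_from_def using rG jt(3) by blast
    then have gtk: "g t < g k" using gm tT kT by blast
    define c where "c = cpos S t"
    have c: "c < length S" "S!c = Commit t" using cpS(1,2)[OF tT] c_def by auto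
    have cq: "c < q" using key c(1) q(1) gtk c(2) q(2) by simp
    have wS: "Write t x v \<in> set S" using jt(3) setS by simp
    have wo: "writes_obj S t x" using wS unfolding writes_obj_def by blast
    have nb: "\<forall>j'. c < j' \<and> j' < q \<longrightarrow> \<not> (\<exists>t'. S ! j' = Commit t' \<and> writes_obj S t' x)"
    proof (intro allI impI)
      fix j' assume j': "c < j' \<and> j' < q"
      show "\<not> (\<exists>t'. S ! j' = Commit t' \<and> writes_obj S t' x)"
      proof
        assume "\<exists>t'. S ! j' = Commit t' \<and> writes_obj S t' x"
        then obtain t' w where t': "S!j' = Commit t'" "Write t' x w \<in> set G"
          unfolding writes_obj_def using setS by blast
        have jl: "j' < length S" using j' q(1) by simp
        have t'T: "t' \<in> T" using t' jl comm_tx setS by (metis nth_mem)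
        have "t' \<noteq> t" using cpS(3)[OF tT jl] t'(1) j' c_def by auto
        have "t' \<noteq> k"
        proof
          assume "t' = k"
          then have "j' = cpos S k" using cpS(3)[OF kT jl] t'(1) by simp
          moreover have "q \<le> cpos S k" using cpS(4)[OF kT q(1)] q(2) by simp
          ultimately show False using j' by simp
        qed
        have "w \<noteq> v" using U t'(2) jt(3) \<open>t' \<noteq> t\<close> unfolding UW_def by blast
        have t'c: "t' \<in> committed G" using t'(1) jl setS unfolding committed_def by (metis mem_Collect_eq nth_mem)
        have tc: "t \<in> committed G" using jt i unfolding committed_def by (metis mem_Collect_eq nth_mem order.strict_trans)
        have vers: "t \<in> versions G x" "t' \<in> versions G x"
          unfolding versions_def writes_obj_def using t'c tc t'(2) jt(3) by blast+
        have "total_on (versions G x) {(i, j). ((x, i), x, j) \<in> vo}"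
          using VO unfolding version_order_def strict_linear_order_on_def by blast
        then have "((x,t),(x,t')) \<in> vo \<or> ((x,t'),(x,t)) \<in> vo"
          using vers \<open>t' \<noteq> t\<close> unfolding total_on_def by blast
        then show False
        proof
          assume "((x,t),(x,t')) \<in> vo"
          then have "(k,t') \<in> R" unfolding R_def opg_def
            using rG jt(3) t'c t'(2) \<open>w \<noteq> v\<close> \<open>t' \<noteq> t\<close> \<open>t' \<noteq> k\<close> by blast
          then have "g k < g t'" using gm kT t'T by blast
          then have "q < j'" using key q jl t'(1) by simp
          then show False using j' by simp
        next
          assume "((x,t'),(x,t)) \<in> vo"
          then have "(t',t) \<in> R" unfolding R_def opg_def
            using rG jt(3) t'c t'(2) \<open>w \<noteq> v\<close> \<open>t' \<noteq> t\<close> \<open>t' \<noteq> k\<close> by blast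
          then have "g t' < g t" using gm tT t'T by blast
          then have "j' < c" using key c jl t'(1) by simp
          then show False using j' by simp
        qed
      qed
    qed
    show "\<exists>j<q. \<exists>t. S ! j = Commit t \<and> writes_obj S t x \<and> Write t x v \<in> set S \<and>
              (\<forall>j'. j < j' \<and> j' < q \<longrightarrow> \<not> (\<exists>t'. S ! j' = Commit t' \<and> writes_obj S t' x))"
      using cq c(2) wo wS nb by blast
  qed
  show ?thesis unfolding opaque_def using V LG TS EQ RT by blast
qed


lemma core:
  assumes "C1 G" "UW G" "valid G"
  shows "opaque G \<longleftrightarrow> (\<exists>vo. version_order G vo \<and> acyclic (opg G vo))"
  using opaque_imp_graph graph_imp_opaque assms by blast

lemma filter_nth:
  "m < length (filter P xs) \<Longrightarrow> \<exists>n<length xs. xs!n = (filter P xs)!m \<and> P (xs!n) \<and>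
     take m (filter P xs) = filter P (take n xs)"
proof (induction xs arbitrary: m)
  case Nil then show ?case by simp
next
  case (Cons a xs)
  show ?case
  proof (cases "P a")
    case True
    show ?thesis
    proof (cases m)
      case 0 then show ?thesis using True by (intro exI[of _ 0]) auto
    next
      case (Suc m')
      then have "m' < length (filter P xs)" using Cons.prems True by simp
      from Cons.IH[OF this] obtain n where "n<length xs" "xs!n = (filter P xs)!m'" "P (xs!n)"
        "take m' (filter P xs) = filter P (take n xs)" by blast
      then show ?thesis using True Suc by (intro exI[of _ "Suc n"]) auto
    qed
  next
    case False
    then have "m < length (filter P xs)" using Cons.prems by simp
    from Cons.IH[OF this] obtain n where "n<length xs" "xs!n = (filter P xs)!m" "P (xs!n)"
      "take m (filter P xs) = filter P (take n xs)" by blast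
    then show ?thesis using False by (intro exI[of _ "Suc n"]) auto
  qed
qed

lemma VF_idx:
  assumes "\<And>n k x v. n<length xs \<Longrightarrow> xs!n = Read k x (Some v) \<Longrightarrow> P (xs!n) \<Longrightarrow>
     (\<exists>t. Commit t \<in> set (take n xs) \<and> P (Commit t) \<and> Write t x v \<in> set (filter P xs))"
  shows "valid (filter P xs)"
  unfolding valid_def valid_read_def
proof (intro allI impI)
  fix m k x v assume m: "m < length (filter P xs)" "filter P xs ! m = Read k x (Some v)"
  from filter_nth[OF m(1)] obtain n where n: "n<length xs" "xs!n = (filter P xs)!m" "P (xs!n)"
     "take m (filter P xs) = filter P (take n xs)" by blast
  from assms[OF n(1)] n m obtain t where t: "Commit t \<in> set (take n xs)" "P (Commit t)"
    "Write t x v \<in> set (filter P xs)" by auto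
  have "Commit t \<in> set (take m (filter P xs))" using n(4) t by simp
  then obtain j where "j < length (take m (filter P xs))" "take m (filter P xs) ! j = Commit t"
    unfolding in_set_conv_nth by blast
  then have "j < m" "filter P xs ! j = Commit t" by auto
  then show "\<exists>j<m. \<exists>t. filter P xs ! j = Commit t \<and> Write t x v \<in> set (filter P xs)"
    using t(3) by blast
qed

lemma IDX:
  assumes "n < length (H1 @ E @ H3)" "(H1 @ E @ H3)!n \<notin> set E"
  shows "\<exists>i<length (H1@H3). (H1@H3)!i = (H1 @ E @ H3)!n \<and> set (take i (H1@H3)) \<subseteq> set (take n (H1 @ E @ H3))"
proof (cases "n < length H1")
  case True
  then show ?thesis by (intro exI[of _ n]) (auto simp: nth_append)
next
  case False
  have "n \<ge> length H1 + length E"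
  proof (rule ccontr)
    assume h: "\<not> ?thesis"
    have b: "n - length H1 < length E" using False h by simp
    have "(H1 @ E @ H3)!n = E!(n - length H1)" using False b by (simp add: nth_append)
    moreover note b
    ultimately show False using assms(2) by simp
  qed
  define i where "i = n - length E"
  have "(H1@H3)!i = H3!(i - length H1)" using False \<open>n \<ge> _\<close> unfolding i_def
    by (simp add: nth_append_right)
  moreover have "(H1 @ E @ H3)!n = (E @ H3)!(n - length H1)" using False
    by (simp add: nth_append_right)
  moreover have "(E @ H3)!(n - length H1) = H3!(n - length H1 - length E)" using \<open>n \<ge> _\<close>
    by (simp add: nth_append_right)
  moreover have "i - length H1 = n - length H1 - length E" unfolding i_def by simp
  ultimately have "(H1@H3)!i = (H1 @ E @ H3)!n" by simp
  moreover have "i < length (H1@H3)" using assms(1) \<open>n \<ge> _\<close> unfolding i_def by simp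
  moreover have "set (take i (H1@H3)) \<subseteq> set (take n (H1 @ E @ H3))"
    using False \<open>n \<ge> _\<close> unfolding i_def by (auto simp: take_append add.commute)
  ultimately show ?thesis by blast
qed


lemma nth_in_take: "j < n \<Longrightarrow> j < length xs \<Longrightarrow> xs!j \<in> set (take n xs)"
proof -
  assume "j < n" "j < length xs"
  then have "j < length (take n xs)" "take n xs ! j = xs!j" by simp_all
  then show ?thesis by (metis nth_mem)
qed

lemma wf_order:
  assumes "well_formed H" "i<length H" "j<length H" "terminal (H!j)" "tid (H!i) = tid (H!j)" "i \<noteq> j"
  shows "i < j"
proof (rule ccontr)
  assume "\<not> i < j"
  then have "j < i" using assms(6) by simp
  then show False using assms unfolding well_formed_def by metis
qed

lemma WF1:
  assumes W: "well_formed H" and "Commit k \<in> set H"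
  shows "\<exists>ys. filter (\<lambda>e. tid e = k) H = ys @ [Commit k] \<and> Commit k \<notin> set ys"
proof -
  obtain c where c: "c < length H" "H!c = Commit k" using assms(2) unfolding in_set_conv_nth by blast
  have Hs: "H = take c H @ Commit k # drop (Suc c) H" using c by (metis id_take_nth_drop)
  have d: "tid e \<noteq> k" if "e \<in> set (drop (Suc c) H)" for e
  proof -
    from that obtain m where m: "m < length (drop (Suc c) H)" "drop (Suc c) H ! m = e"
      unfolding in_set_conv_nth by blast
    then have "Suc c + m < length H" "H!(Suc c + m) = e" by auto
    then show ?thesis using W c unfolding well_formed_def
      by (metis add_Suc less_add_Suc1 terminal.simps(1) tid.simps(3))
  qed
  have a: "Commit k \<notin> set (take c H)"
  proof
    assume "Commit k \<in> set (take c H)"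
    then obtain m where m: "m < length (take c H)" "take c H ! m = Commit k"
      unfolding in_set_conv_nth by blast
    then have mc: "m < c" "H!m = Commit k" by auto
    moreover have "m < length H" using mc c by simp
    ultimately have "tid (H!c) \<noteq> tid (H!m)" using W[unfolded well_formed_def, rule_format, of m c] mc c(1) by simp
    then show False using mc c by simp
  qed
  have "filter (\<lambda>e. tid e = k) H = filter (\<lambda>e. tid e = k) (take c H) @ [Commit k]"
    using d by (subst Hs) (simp add: filter_empty_conv)
  then show ?thesis using a by auto
qed

lemma UW_H: "unique_writes H \<Longrightarrow> UW H"
  unfolding UW_def unique_writes_def
proof (intro allI impI)
  fix a b x v assume U: "\<forall>i<length H. \<forall>j<length H. \<forall>k k' x v. H ! i = Write k x v \<longrightarrow> H ! j = Write k' x v \<longrightarrow> i = j"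
    and h: "Write a x v \<in> set H" "Write b x v \<in> set H"
  from h obtain i j where "i < length H" "H!i = Write a x v" "j < length H" "H!j = Write b x v"
    unfolding in_set_conv_nth by blast
  with U have "i = j" by blast
  with \<open>H!i = _\<close> \<open>H!j = _\<close> show "a = b" by simp
qed

lemma noCommit:
  assumes W: "well_formed H" and "t \<in> aborted H"
  shows "Commit t \<notin> set H"
proof
  assume "Commit t \<in> set H"
  then obtain c where c: "c < length H" "H!c = Commit t" unfolding in_set_conv_nth by blast
  from assms(2) obtain e where e: "e \<in> set H" "aborting e" "tid e = t" unfolding aborted_def by blast
  then obtain p where p: "p < length H" "H!p = e" unfolding in_set_conv_nth by blast
  have te: "terminal e" using e(2) by (cases e rule: aborting.cases) auto
  have "p \<noteq> c" using p c e(2) by auto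
  then have "p < c \<or> c < p" by auto
  then show False
  proof
    assume "p < c" then show False using W p c e te unfolding well_formed_def by (metis tid.simps(3))
  next
    assume "c < p" then show False using W p c e te unfolding well_formed_def by (metis terminal.simps(1) tid.simps(3))
  qed
qed

lemma sh_committed_ok:
  fixes H :: "('o::finite,'v::zero) history"
  assumes H: "is_history H" and V: "valid H"
  shows "C1 (sh_committed H) \<and> UW (sh_committed H) \<and> valid (sh_committed H)"
proof (intro conjI)
  have W: "well_formed H" and UH: "unique_writes H" using H unfolding is_history_def by auto
  define P :: "('o,'v) event \<Rightarrow> bool" where "P e = (tid e \<in> committed H)" for e
  have sh: "sh_committed H = filter P H" unfolding sh_committed_def subhistory_def P_def ..
  show "C1 (sh_committed H)" unfolding C1_def
  proof
    fix k assume "k \<in> txns (sh_committed H)"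
    then have kc: "k \<in> committed H" unfolding sh txns_def P_def by auto
    have "filter (\<lambda>e. tid e = k) (filter P H) = filter (\<lambda>e. tid e = k) H"
      unfolding filter_filter P_def using kc by (intro filter_cong) auto
    then show "\<exists>ys. filter (\<lambda>e. tid e = k) (sh_committed H) = ys @ [Commit k] \<and> Commit k \<notin> set ys"
      using WF1[OF W] kc unfolding sh committed_def by simp
  qed
  show "UW (sh_committed H)" using UW_H[OF UH] unfolding UW_def sh by auto
  show "valid (sh_committed H)" unfolding sh
  proof (rule VF_idx)
    fix n k x v assume n: "n < length H" "H!n = Read k x (Some v)" "P (H!n)"
    have "valid_read H n" using V n unfolding valid_def by blast
    then obtain j t where jt: "j<n" "H!j = Commit t" "Write t x v \<in> set H"
      unfolding valid_read_def using n(2) by blast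
    have "Commit t \<in> set (take n H)" using nth_in_take[of j n H] jt n by simp
    moreover have "P (Commit t)" unfolding P_def committed_def using jt n
      by (metis mem_Collect_eq nth_mem order.strict_trans tid.simps(3))
    moreover have "Write t x v \<in> set (filter P H)" using jt(3) calculation(2) unfolding P_def by simp
    ultimately show "\<exists>t. Commit t \<in> set (take n H) \<and> P (Commit t) \<and> Write t x v \<in> set (filter P H)" by blast
  qed
qed


lemma H2_prefix:
  assumes "\<And>n. L n \<longleftrightarrow> n = n0"
  shows "m \<le> length xs \<Longrightarrow> concat (map (\<lambda>n. [xs!n] @ (if L n then [c] else [])) [0..<m]) =
    (if m \<le> n0 then take m xs else take (Suc n0) xs @ c # take (m - Suc n0) (drop (Suc n0) xs))"
proof (induction m)
  case 0 then show ?case by simp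
next
  case (Suc m)
  then have IH: "concat (map (\<lambda>n. [xs!n] @ (if L n then [c] else [])) [0..<m]) =
    (if m \<le> n0 then take m xs else take (Suc n0) xs @ c # take (m - Suc n0) (drop (Suc n0) xs))" by simp
  have tk: "take (Suc m) xs = take m xs @ [xs!m]" using Suc.prems by (simp add: take_Suc_conv_app_nth)
  consider "m < n0" | "m = n0" | "m > n0" by linarith
  then show ?case
  proof cases
    case 1 then show ?thesis using IH tk assms by simp
  next
    case 2 then show ?thesis using IH tk assms by simp
  next
    case 3
    have "take (Suc m - Suc n0) (drop (Suc n0) xs) = take (m - Suc n0) (drop (Suc n0) xs) @ [xs!m]"
    proof -
      have "Suc m - Suc n0 = Suc (m - Suc n0)" using 3 by simp
      moreover have "m - Suc n0 < length (drop (Suc n0) xs)" using 3 Suc.prems by simp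
      moreover have "drop (Suc n0) xs ! (m - Suc n0) = xs!m" using 3 Suc.prems by simp
      ultimately show ?thesis by (simp add: take_Suc_conv_app_nth)
    qed
    then show ?thesis using IH 3 assms by simp
  qed
qed

lemma H2_some:
  assumes "\<And>n. L n \<longleftrightarrow> n = n0" "n0 < length xs"
  shows "concat (map (\<lambda>n. [xs!n] @ (if L n then [c] else [])) [0..<length xs]) =
    take (Suc n0) xs @ c # drop (Suc n0) xs"
  using H2_prefix[OF assms(1), of "length xs" xs c] assms(2) by simp

lemma H2_none:
  assumes "\<And>n. \<not> L n"
  shows "concat (map (\<lambda>n. [xs!n] @ (if L n then [c] else [])) [0..<length xs]) = xs"
  using assms by (simp add: map_nth)


lemma sh_aborted_ok:
  fixes H :: "('o::finite,'v::zero) history"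
  assumes H: "is_history H" and V: "valid H" and ab: "t \<in> aborted H"
  shows "C1 (sh_aborted H t) \<and> UW (sh_aborted H t) \<and> valid (sh_aborted H t)"
proof -
  have W: "well_formed H" and UH: "unique_writes H" using H unfolding is_history_def by auto
  have nc: "Commit t \<notin> set H" using noCommit[OF W ab] .
  define p where "p = idx_of_abort H t"
  obtain e0 where e0: "e0 \<in> set H" "aborting e0" "tid e0 = t" using ab unfolding aborted_def by blast
  then obtain q0 where "q0 < length H" "H!q0 = e0" unfolding in_set_conv_nth by blast
  then have "\<exists>q. q < length H \<and> aborting (H ! q) \<and> tid (H ! q) = t" using e0 by blast
  then have p: "p < length H" "aborting (H!p)" "tid (H!p) = t"
    unfolding p_def idx_of_abort_def by (metis (mono_tags, lifting) LeastI_ex)+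
  have pterm: "terminal (H!p)" using p(2) by (cases "H!p" rule: aborting.cases) auto
  define CB where "CB = commit_idx_before H p"
  have CBc: "Commit k \<in> set H" if "k \<in> CB" for k
  proof -
    from that obtain j where "j < p" "H!j = Commit k" unfolding CB_def commit_idx_before_def by blast
    then show ?thesis using p(1) by (metis nth_mem order.strict_trans)
  qed
  have tCB: "t \<notin> CB" using nc CBc by blast
  define Q :: "('o,'v) event \<Rightarrow> bool" where "Q e = (tid e \<in> CB \<or> (tid e = t \<and> successful_op e))" for e
  define Q' :: "('o,'v) event \<Rightarrow> bool" where "Q' e = (Q e \<or> e = Commit t)" for e
  define L where "L n = last_succ_op H t n" for n
  define H2 where "H2 = concat (map (\<lambda>n. [H!n] @ (if L n then [Commit t] else [])) [0..<length H])"
  have sh: "sh_aborted H t = filter Q' H2"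
    unfolding sh_aborted_def H2_def filter_concat map_map
  proof (intro arg_cong[where f=concat] map_cong refl)
    fix n assume "n \<in> set [0..<length H]"
    then have "H!n \<noteq> Commit t" using nc by (metis atLeastLessThan_iff nth_mem set_upt)
    then show "(if tid (H ! n) \<in> commit_idx_before H (idx_of_abort H t) \<or> tid (H ! n) = t \<and> successful_op (H ! n)
           then [H ! n] else []) @ (if last_succ_op H t n then [Commit t] else []) =
          (filter Q' \<circ> (\<lambda>n. [H ! n] @ (if L n then [Commit t] else []))) n"
      unfolding Q'_def Q_def L_def CB_def p_def by simp
  qed
  have Lu: "n = n'" if "L n" "L n'" for n n'
    using that unfolding L_def last_succ_op_def by (metis linorder_neqE_nat)
  obtain H1 E H3 where Hs: "H2 = H1 @ E @ H3" "H = H1 @ H3" "set E \<subseteq> {Commit t}"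
    and cases: "(E = [] \<and> (\<forall>e\<in>set H. \<not> (tid e = t \<and> successful_op e))) \<or>
       (E = [Commit t] \<and> (\<forall>e\<in>set H3. \<not> (tid e = t \<and> successful_op e)))"
  proof (cases "\<exists>n. L n")
    case True
    then obtain n0 where n0: "L n0" by blast
    have Ln: "L n \<longleftrightarrow> n = n0" for n using Lu[of n n0] n0 by blast
    have n0l: "n0 < length H" using n0 unfolding L_def last_succ_op_def by simp
    have after: "\<forall>m. n0 < m \<and> m < length H \<longrightarrow> \<not> (tid (H ! m) = t \<and> successful_op (H ! m))"
      using n0 unfolding L_def last_succ_op_def by blast
    have eq2: "H2 = take (Suc n0) H @ [Commit t] @ drop (Suc n0) H"
      unfolding H2_def using H2_some[of L n0 H "Commit t", OF Ln n0l] by simp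
    have nos: "\<forall>e\<in>set (drop (Suc n0) H). \<not> (tid e = t \<and> successful_op e)"
    proof
      fix e assume "e \<in> set (drop (Suc n0) H)"
      then obtain m where "m < length (drop (Suc n0) H)" "drop (Suc n0) H ! m = e"
        unfolding in_set_conv_nth by blast
      then have m: "Suc n0 + m < length H" "H!(Suc n0 + m) = e" by auto
      show "\<not> (tid e = t \<and> successful_op e)" using after[rule_format, of "Suc n0 + m"] m by simp
    qed
    show ?thesis
    proof (rule that[of "take (Suc n0) H" "[Commit t]" "drop (Suc n0) H"])
      show "H2 = take (Suc n0) H @ [Commit t] @ drop (Suc n0) H" by (rule eq2)
      show "H = take (Suc n0) H @ drop (Suc n0) H" by simp
      show "set [Commit t] \<subseteq> {Commit t}" by simp
      show "[Commit t] = [] \<and> (\<forall>e\<in>set H. \<not> (tid e = t \<and> successful_op e)) \<or>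
        [Commit t] = [Commit t] \<and> (\<forall>e\<in>set (drop (Suc n0) H). \<not> (tid e = t \<and> successful_op e))"
        using nos by blast
    qed
  next
    case False
    have eq2: "H2 = H" unfolding H2_def by (rule H2_none) (use False in blast)
    have nos: "\<forall>e\<in>set H. \<not> (tid e = t \<and> successful_op e)"
    proof (rule ccontr)
      assume "\<not> ?thesis"
      then obtain e where "e \<in> set H" "tid e = t" "successful_op e" by blast
      then obtain i where "i < length H" "H!i = e" unfolding in_set_conv_nth by blast
      define N where "N = {n. n < length H \<and> tid (H!n) = t \<and> successful_op (H!n)}"
      have fN: "finite N" unfolding N_def by simp
      have ne: "i \<in> N" unfolding N_def using \<open>i < _\<close> \<open>H!i = e\<close> \<open>tid e = t\<close> \<open>successful_op e\<close> by simp
      define n where "n = Max N"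
      have nN: "n \<in> N" unfolding n_def using fN ne by (intro Max_in) auto
      have mx: "\<forall>m. n < m \<and> m < length H \<longrightarrow> \<not> (tid (H ! m) = t \<and> successful_op (H ! m))"
      proof (intro allI impI notI)
        fix m assume h1: "n < m \<and> m < length H" and h2: "tid (H ! m) = t \<and> successful_op (H ! m)"
        then have "m \<in> N" unfolding N_def by simp
        then have "m \<le> n" unfolding n_def using fN by simp
        then show False using h1 by simp
      qed
      have "L n" unfolding L_def last_succ_op_def using nN mx unfolding N_def by blast
      then show False using False by blast
    qed
    show ?thesis
    proof (rule that[of H "[]" "[]"])
      show "H2 = H @ [] @ []" using eq2 by simp
      show "H = H @ []" by simp
      show "set [] \<subseteq> {Commit t}" by simp
      show "[] = [] \<and> (\<forall>e\<in>set H. \<not> (tid e = t \<and> successful_op e)) \<or>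
        [] = [Commit t] \<and> (\<forall>e\<in>set []. \<not> (tid e = t \<and> successful_op e))" using nos by blast
    qed
  qed
  have setH2: "set H2 = set H \<union> set E" using Hs by auto
  have iltp: "i < p" if "i < length H" "Q (H!i)" "\<not> terminal (H!i)" for i
  proof (cases "tid (H!i) \<in> CB")
    case True
    then obtain ck where ck: "ck < p" "H!ck = Commit (tid (H!i))" unfolding CB_def commit_idx_before_def by blast
    have ckl: "ck < length H" using ck p(1) by simp
    have ckt: "terminal (H!ck)" using ck by simp
    have "i \<noteq> ck" using ckt that(3) by auto
    then have "i < ck" using wf_order[OF W that(1) ckl ckt] ck(2) by simp
    then show ?thesis using ck by simp
  next
    case False
    then have "tid (H!i) = t" using that(2) unfolding Q_def by blast
    moreover have "i \<noteq> p" using that(3) pterm by auto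
    ultimately show "i < p" using wf_order[OF W that(1) p(1) pterm] p(3) by simp
  qed
  have C1sh: "C1 (filter Q' H2)" unfolding C1_def
  proof
    fix k assume "k \<in> txns (filter Q' H2)"
    then obtain e where e: "e \<in> set H2" "Q' e" "tid e = k" unfolding txns_def by auto
    show "\<exists>ys. filter (\<lambda>e. tid e = k) (filter Q' H2) = ys @ [Commit k] \<and> Commit k \<notin> set ys"
    proof (cases "k = t")
      case False
      then have kCB: "k \<in> CB" using e unfolding Q'_def Q_def by auto
      have "filter (\<lambda>e. tid e = k) (filter Q' H2) = filter (\<lambda>e. tid e = k) H2"
        unfolding filter_filter using kCB by (intro filter_cong) (auto simp: Q'_def Q_def)
      also have "\<dots> = filter (\<lambda>e. tid e = k) H"
      proof -
        have "filter (\<lambda>e. tid e = k) E = []" using Hs(3) False by (auto simp: filter_empty_conv)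
        then show ?thesis using Hs by simp
      qed
      finally show ?thesis using WF1[OF W CBc[OF kCB]] by simp
    next
      case True
      have Ec: "E = [Commit t]"
      proof (rule ccontr)
        assume "E \<noteq> [Commit t]"
        then have E0: "E = []" and nos: "\<forall>e\<in>set H. \<not> (tid e = t \<and> successful_op e)" using cases by auto
        have "e \<in> set H" using e(1) setH2 E0 by simp
        then show False using e nos True tCB nc unfolding Q'_def Q_def by auto
      qed
      with cases have nos3: "\<forall>e\<in>set H3. \<not> (tid e = t \<and> successful_op e)" by auto
      have "filter (\<lambda>e. tid e = t) (filter Q' H3) = []"
        using nos3 tCB nc Hs(2) unfolding Q'_def Q_def by (auto simp: filter_empty_conv)
      then have "filter (\<lambda>e. tid e = t) (filter Q' H2) = filter (\<lambda>e. tid e = t) (filter Q' H1) @ [Commit t]"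
        using Hs(1) Ec unfolding Q'_def by simp
      moreover have "Commit t \<notin> set (filter (\<lambda>e. tid e = t) (filter Q' H1))" using nc Hs(2) by auto
      ultimately show ?thesis using True by blast
    qed
  qed
  have UWsh: "UW (filter Q' H2)" using UW_H[OF UH] Hs(3) setH2 unfolding UW_def by auto
  have Vsh: "valid (filter Q' H2)"
  proof (rule VF_idx)
    fix n k x v assume n: "n < length H2" "H2!n = Read k x (Some v)" "Q' (H2!n)"
    have "H2!n \<notin> set E" using n(2) Hs(3) by auto
    from IDX[OF n(1)[unfolded Hs(1)] this[unfolded Hs(1)]] obtain i where
      i: "i < length H" "H!i = H2!n" "set (take i H) \<subseteq> set (take n H2)" using Hs by auto
    have Qi: "Q (H!i)" using n(2,3) i(2) unfolding Q'_def by auto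
    have ip: "i < p" using iltp[OF i(1) Qi] i(2) n(2) by simp
    have "valid_read H i" using V i unfolding valid_def by blast
    then obtain j t' where jt: "j<i" "H!j = Commit t'" "Write t' x v \<in> set H"
      unfolding valid_read_def using n(2) i(2) by auto
    have "Commit t' \<in> set (take i H)" using nth_in_take[of j i H] jt i by simp
    then have c1: "Commit t' \<in> set (take n H2)" using i(3) by blast
    have "j < p" using jt(1) ip by simp
    then have t'CB: "t' \<in> CB" unfolding CB_def commit_idx_before_def using jt(2) by blast
    then have c2: "Q' (Commit t')" unfolding Q'_def Q_def by simp
    have "Write t' x v \<in> set (filter Q' H2)" using jt(3) setH2 t'CB unfolding Q'_def Q_def by simp
    then show "\<exists>t. Commit t \<in> set (take n H2) \<and> Q' (Commit t) \<and> Write t x v \<in> set (filter Q' H2)"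
      using c1 c2 by blast
  qed
  show ?thesis unfolding sh using C1sh UWsh Vsh by blast
qed


theorem theorem1:
  fixes H :: "('o::finite, 'v::zero) history"
  assumes "is_history H"
    and "valid H"
  shows "locally_opaque H \<longleftrightarrow>
    (\<forall>sh\<in>shSet H. \<exists>vo. version_order sh vo \<and> acyclic (opg sh vo))"
proof -
  have ok: "C1 sh \<and> UW sh \<and> valid sh" if "sh \<in> shSet H" for sh
    using that sh_aborted_ok[OF assms] sh_committed_ok[OF assms] unfolding shSet_def by blast
  show ?thesis unfolding locally_opaque_def using ok core by blast
qed

end
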